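(* Let $(\mathcal{P},\cdot)$ be a finite-dimensional admissible Poisson algebra which is not a nilalgebra. Then $\mathcal{P}$ contains a non-zero idempotent $e$, i.e. $e\ne0$ and $e\cdot e=e$.
   Context: $\mathbb{K}$ is a field of characteristic different from $2$ and $3$. Associator: $A(X,Y,Z)=(X\cdot Y)\cdot Z-X\cdot(Y\cdot Z)$. An admissible Poisson algebra is a $\mathbb{K}$-vector space $\mathcal{P}$ with a bilinear product $\cdot$ satisfying $3A(X,Y,Z)=(X\cdot Z)\cdot Y+(Y\cdot Z)\cdot X-(Y\cdot X)\cdot Z-(Z\cdot X)\cdot Y$ for all $X,Y,Z$. Powers: $X^1=X$, $X^{i+1}=X\cdot X^i$. An element $X$ is nilpotent if $X^r=0$ for some $r$; $\mathcal{P}$ is a nilalgebra if every element is nilpotent. *)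

theory Defs
  imports Complex_Main
begin

definition assoc :: "('v \<Rightarrow> 'v \<Rightarrow> 'v) \<Rightarrow> 'v \<Rightarrow> 'v \<Rightarrow> 'v \<Rightarrow> 'v::ab_group_add" where
  "assoc m X Y Z = m (m X Y) Z - m X (m Y Z)"

definition bilinear_prod :: "('k::field \<Rightarrow> 'v \<Rightarrow> 'v) \<Rightarrow> ('v \<Rightarrow> 'v \<Rightarrow> 'v::ab_group_add) \<Rightarrow> bool" where
  "bilinear_prod scale m \<longleftrightarrow>
     (\<forall>x y z. m (x + y) z = m x z + m y z) \<and>
     (\<forall>x y z. m x (y + z) = m x y + m x z) \<and>
     (\<forall>a x y. m (scale a x) y = scale a (m x y)) \<and>
     (\<forall>a x y. m x (scale a y) = scale a (m x y))"

definition admissible_poisson :: "('k::field \<Rightarrow> 'v \<Rightarrow> 'v) \<Rightarrow> ('v \<Rightarrow> 'v \<Rightarrow> 'v::ab_group_add) \<Rightarrow> bool" where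
  "admissible_poisson scale m \<longleftrightarrow>
     (\<forall>X Y Z. scale 3 (assoc m X Y Z) =
        m (m X Z) Y + m (m Y Z) X - m (m Y X) Z - m (m Z X) Y)"

text \<open>Powers: ppow m X i = X^(i+1), where X^1 = X and X^(j+1) = X \<cdot> X^j.\<close>
primrec ppow :: "('v \<Rightarrow> 'v \<Rightarrow> 'v) \<Rightarrow> 'v \<Rightarrow> nat \<Rightarrow> 'v" where
  "ppow m X 0 = X"
| "ppow m X (Suc i) = m X (ppow m X i)"

definition nilpotent_elem :: "('v \<Rightarrow> 'v \<Rightarrow> 'v) \<Rightarrow> 'v::zero \<Rightarrow> bool" where
  "nilpotent_elem m X \<longleftrightarrow> (\<exists>i. ppow m X i = 0)"

definition nilalgebra :: "('v \<Rightarrow> 'v \<Rightarrow> 'v::zero) \<Rightarrow> bool" where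
  "nilalgebra m \<longleftrightarrow> (\<forall>X. nilpotent_elem m X)"

end

theory Submission
  imports Defs
begin

declare ppow.simps(2)[simp del]

locale apa = finite_dimensional_vector_space scale Basis
  for scale :: "'k::field \<Rightarrow> 'v::ab_group_add \<Rightarrow> 'v" (infixr \<open>*s\<close> 75)
  and Basis :: "'v set" +
  fixes m :: "'v \<Rightarrow> 'v \<Rightarrow> 'v"
  assumes c2: "(2::'k) \<noteq> 0" and c3: "(3::'k) \<noteq> 0"
    and bil: "bilinear_prod scale m"
    and adm: "admissible_poisson scale m"
begin

lemma madd1: "m (x + y) z = m x z + m y z" using bil unfolding bilinear_prod_def by blast
lemma madd2: "m x (y + z) = m x y + m x z" using bil unfolding bilinear_prod_def by blast
lemma msc1: "m (a *s x) y = a *s (m x y)" using bil unfolding bilinear_prod_def by blast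
lemma msc2: "m x (a *s y) = a *s (m x y)" using bil unfolding bilinear_prod_def by blast

lemma m01: "m 0 z = 0"
proof -
  have "m 0 z = m 0 z + m 0 z" using madd1[of 0 0 z] by simp
  then show ?thesis by simp
qed
lemma m02: "m z 0 = 0"
proof -
  have "m z 0 = m z 0 + m z 0" using madd2[of z 0 0] by simp
  then show ?thesis by simp
qed
lemma mneg1: "m (- x) z = - m x z"
  using madd1[of x "- x" z] m01 by (simp add: eq_neg_iff_add_eq_0 add.commute)
lemma mneg2: "m z (- x) = - m z x"
  using madd2[of z x "- x"] m02 by (simp add: eq_neg_iff_add_eq_0 add.commute)
lemma mdiff1: "m (x - y) z = m x z - m y z"
  using madd1[of x "- y" z] mneg1 by simp
lemma mdiff2: "m z (x - y) = m z x - m z y"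
  using madd2[of z x "- y"] mneg2 by simp

lemmas mlin = madd1 madd2 mdiff1 mdiff2 mneg1 mneg2

lemma three: "(3::'k) *s v = v + v + v"
proof -
  have "(3::'k) *s v = (1 + 1 + 1) *s v" by simp
  also have "\<dots> = v + v + v" by (simp only: scale_left_distrib scale_one)
  finally show ?thesis .
qed

lemma two: "(2::'k) *s v = v + v"
proof -
  have "(2::'k) *s v = (1 + 1) *s v" by simp
  also have "\<dots> = v + v" by (simp only: scale_left_distrib scale_one)
  finally show ?thesis .
qed

lemma I0: "((m (m X Y) Z - m X (m Y Z)) + (m (m X Y) Z - m X (m Y Z)) + (m (m X Y) Z - m X (m Y Z)))
   - (m (m X Z) Y + m (m Y Z) X - m (m Y X) Z - m (m Z X) Y) = 0"
  using adm unfolding admissible_poisson_def assoc_def by (simp add: three)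

definition s :: "'v \<Rightarrow> 'v \<Rightarrow> 'v" where "s a b = m a b + m b a"

lemma s_assoc: "s (s x y) z = s x (s y z)"
proof -
  define T where "T = s (s x y) z - s x (s y z)"
  have E: "T + T + T =
     ((m (m x y) z - m x (m y z)) + (m (m x y) z - m x (m y z)) + (m (m x y) z - m x (m y z))
   - (m (m x z) y + m (m y z) x - m (m y x) z - m (m z x) y))
   + ((m (m x z) y - m x (m z y)) + (m (m x z) y - m x (m z y)) + (m (m x z) y - m x (m z y))
   - (m (m x y) z + m (m z y) x - m (m z x) y - m (m y x) z))
   - ((m (m z x) y - m z (m x y)) + (m (m z x) y - m z (m x y)) + (m (m z x) y - m z (m x y))
   - (m (m z y) x + m (m x y) z - m (m x z) y - m (m y z) x))
   - ((m (m z y) x - m z (m y x)) + (m (m z y) x - m z (m y x)) + (m (m z y) x - m z (m y x))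
   - (m (m z x) y + m (m y x) z - m (m y z) x - m (m x z) y))"
    unfolding T_def s_def by (simp add: mlin algebra_simps)
  have "T + T + T = 0" unfolding E I0 by simp
  then have "(3::'k) *s T = 0" by (simp add: three)
  then have "T = 0" using c3 by simp
  then show ?thesis unfolding T_def by simp
qed

definition br :: "'v \<Rightarrow> 'v \<Rightarrow> 'v" where "br a b = m a b - m b a"

lemma leib: "m x (s y z) - m (s y z) x - m (br x y) z - m z (br x y) - m y (br x z) - m (br x z) y = 0"
proof -
  define T where "T = m x (s y z) - m (s y z) x - m (br x y) z - m z (br x y) - m y (br x z) - m (br x z) y"
  have E: "T + T + T = 0 - ((m (m x y) z - m x (m y z)) + (m (m x y) z - m x (m y z)) + (m (m x y) z - m x (m y z)) - (m (m x z) y + m (m y z) x - m (m y x) z - m (m z x) y)) - ((m (m x z) y - m x (m z y)) + (m (m x z) y - m x (m z y)) + (m (m x z) y - m x (m z y)) - (m (m x y) z + m (m z y) x - m (m z x) y - m (m y x) z)) + ((m (m y x) z - m y (m x z)) + (m (m y x) z - m y (m x z)) + (m (m y x) z - m y (m x z)) - (m (m y z) x + m (m x z) y - m (m x y) z - m (m z y) x)) - ((m (m y z) x - m y (m z x)) + (m (m y z) x - m y (m z x)) + (m (m y z) x - m y (m z x)) - (m (m y x) z + m (m z x) y - m (m z y) x - m (m x y) z)) + ((m (m z x) y - m z (m x y)) + (m (m z x) y - m z (m x y)) + (m (m z x) y - m z (m x y)) - (m (m z y) x + m (m x y) z - m (m x z) y - m (m y z) x)) - ((m (m z y) x - m z (m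 y x)) + (m (m z y) x - m z (m y x)) + (m (m z y) x - m z (m y x)) - (m (m z x) y + m (m y x) z - m (m y z) x - m (m x z) y))"
    unfolding T_def s_def br_def by (simp add: mlin algebra_simps)
  have "T + T + T = 0" unfolding E I0 by simp
  then have "(3::'k) *s T = 0" by (simp add: three)
  then have "T = 0" using c3 by simp
  then show ?thesis unfolding T_def by simp
qed

lemma comm_step: assumes "m x q = m q x" shows "m x (m x q) = m (m x q) x"
proof -
  have "m x (s x q) - m (s x q) x - m (br x x) q - m q (br x x) - m x (br x q) - m (br x q) x = 0"
    by (rule leib)
  moreover have "br x x = 0" "br x q = 0" using assms by (simp_all add: br_def)
  ultimately have "m x (s x q) - m (s x q) x = 0" by (simp add: m01 m02)
  then have "(m x (m x q) - m (m x q) x) + (m x (m x q) - m (m x q) x) = 0"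
    unfolding s_def using assms by (simp add: mlin algebra_simps)
  then have "(2::'k) *s (m x (m x q) - m (m x q) x) = 0" by (simp add: two)
  then show ?thesis using c2 by simp
qed

lemma s_sc1: "s (k *s a) b = k *s s a b" unfolding s_def by (simp add: msc1 msc2 scale_right_distrib)
lemma s_sc2: "s b (k *s a) = k *s s b a" unfolding s_def by (simp add: msc1 msc2 scale_right_distrib)

definition circ :: "'v \<Rightarrow> 'v \<Rightarrow> 'v" where "circ a b = (1/2) *s s a b"

lemma half: "(1/2::'k) *s (v + v) = v"
proof -
  have h: "(1/2 + 1/2 :: 'k) = 1" using c2 by (simp add: field_simps)
  have "(1/2::'k) *s (v + v) = (1/2 + 1/2) *s v" by (simp only: scale_right_distrib scale_left_distrib)
  then show ?thesis by (simp only: h scale_one)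
qed

lemma circ_comm: "circ a b = circ b a" unfolding circ_def s_def by (simp add: add.commute)
lemma circ_add1: "circ (a + b) c = circ a c + circ b c"
  unfolding circ_def s_def by (simp add: madd1 madd2 scale_right_distrib algebra_simps)
lemma circ_add2: "circ c (a + b) = circ c a + circ c b"
  using circ_add1 circ_comm by metis
lemma circ_sc1: "circ (k *s a) b = k *s circ a b"
  unfolding circ_def by (simp add: s_sc1 mult.commute)
lemma circ_sc2: "circ b (k *s a) = k *s circ b a"
  unfolding circ_def by (simp add: s_sc2 mult.commute)
lemma circ_01: "circ 0 b = 0" unfolding circ_def s_def by (simp add: m01 m02)
lemma circ_02: "circ b 0 = 0" unfolding circ_def s_def by (simp add: m01 m02)
lemma circ_assoc: "circ (circ a b) c = circ a (circ b c)"
  unfolding circ_def by (simp add: s_sc1 s_sc2 s_assoc)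
lemma circ_self: "circ e e = m e e" unfolding circ_def s_def by (rule half)

lemma pcomm: "m x (ppow m x n) = m (ppow m x n) x"
proof (induction n)
  case 0 then show ?case by simp
next
  case (Suc n) show ?case unfolding ppow.simps(2) by (rule comm_step[OF Suc.IH])
qed

lemma circ_xP: "circ x (ppow m x n) = ppow m x (Suc n)"
  unfolding circ_def s_def ppow.simps(2) by (simp add: pcomm[symmetric] half)

lemma circ_PP: "circ (ppow m x i) (ppow m x j) = ppow m x (i + j + 1)"
proof (induction i)
  case 0 then show ?case using circ_xP by simp
next
  case (Suc i)
  have "circ (ppow m x (Suc i)) (ppow m x j) = circ (circ x (ppow m x i)) (ppow m x j)"
    by (simp add: circ_xP)
  also have "\<dots> = circ x (ppow m x (i + j + 1))" by (simp add: circ_assoc Suc)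
  also have "\<dots> = ppow m x (Suc i + j + 1)" by (simp add: circ_xP)
  finally show ?case .
qed

definition SS :: "'v \<Rightarrow> nat \<Rightarrow> 'v set" where "SS x r = span {ppow m x j | j. r \<le> j}"

lemma Smul_gen: assumes "i \<ge> a" and "v \<in> SS x b" shows "circ (ppow m x i) v \<in> SS x (a + b + 1)"
  using assms(2) unfolding SS_def
proof (induction rule: span_induct_alt)
  case base then show ?case by (simp add: circ_02 span_zero)
next
  case (step c g y)
  then obtain j where j: "g = ppow m x j" "b \<le> j" by blast
  have "circ (ppow m x i) g \<in> span {ppow m x j | j. a + b + 1 \<le> j}"
    using j assms(1) by (intro span_base) (auto simp: circ_PP)
  then show ?case using step by (simp add: circ_add2 circ_sc2 span_add span_scale)
qed

lemma Smul: assumes "u \<in> SS x a" and "v \<in> SS x b" shows "circ u v \<in> SS x (a + b + 1)"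
  using assms(1) unfolding SS_def
proof (induction rule: span_induct_alt)
  case base then show ?case by (simp add: circ_01 span_zero)
next
  case (step c g y)
  then obtain i where i: "g = ppow m x i" "a \<le> i" by blast
  have "circ g v \<in> SS x (a + b + 1)" using Smul_gen[OF i(2) assms(2)] i by simp
  then show ?case using step unfolding SS_def by (simp add: circ_add1 circ_sc1 span_add span_scale)
qed

lemma idem: assumes nz: "\<forall>i. ppow m x i \<noteq> 0" shows "\<exists>e. e \<noteq> 0 \<and> m e e = e"
proof -
  have sub: "SS x (Suc r) \<subseteq> SS x r" for r unfolding SS_def by (rule span_mono) auto
  have "\<exists>r. dim (SS x r) \<le> dim (SS x (Suc r))"
  proof (rule ccontr)
    assume "\<not> ?thesis"
    then have lt: "dim (SS x (Suc r)) < dim (SS x r)" for r by (simp add: not_le)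
    have "dim (SS x r) + r \<le> dim (SS x 0)" for r
    proof (induction r)
      case 0 then show ?case by simp
    next
      case (Suc r) then show ?case using lt[of r] by simp
    qed
    from this[of "Suc (dim (SS x 0))"] show False by simp
  qed
  then obtain r where r: "dim (SS x r) \<le> dim (SS x (Suc r))" by blast
  have "span (SS x (Suc r)) = span (SS x r)" by (rule dim_eq_span[OF sub r])
  then have eqS: "SS x (Suc r) = SS x r" unfolding SS_def by (simp only: span_span)
  have "ppow m x r \<in> SS x r" unfolding SS_def by (rule span_base) auto
  then have Pin: "ppow m x r \<in> span {ppow m x j | j. Suc r \<le> j}" using eqS unfolding SS_def by simp
  have "\<exists>u \<in> SS x 0. v = circ (ppow m x r) u" if "v \<in> span {ppow m x j | j. Suc r \<le> j}" for v
    using that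
  proof (induction rule: span_induct_alt)
    case base then show ?case by (intro bexI[of _ 0]) (simp_all add: circ_02 SS_def span_zero)
  next
    case (step c g y)
    then obtain j where j: "g = ppow m x j" "Suc r \<le> j" by blast
    from step obtain u where u: "u \<in> SS x 0" "y = circ (ppow m x r) u" by blast
    have g: "g = circ (ppow m x r) (ppow m x (j - Suc r))" using j by (simp add: circ_PP)
    have "ppow m x (j - Suc r) \<in> SS x 0" unfolding SS_def by (rule span_base) auto
    then have "c *s ppow m x (j - Suc r) + u \<in> SS x 0" using u(1) unfolding SS_def
      by (simp add: span_add span_scale)
    moreover have "c *s g + y = circ (ppow m x r) (c *s ppow m x (j - Suc r) + u)"
      using g u(2) by (simp add: circ_add2 circ_sc2)
    ultimately show ?case by blast
  qed
  from this[OF Pin] obtain y where y: "y \<in> SS x 0" "ppow m x r = circ (ppow m x r) y" by blast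
  define yp where "yp k = (circ y ^^ k) y" for k
  have ypS: "yp k \<in> SS x k" for k
  proof (induction k)
    case 0 then show ?case using y by (simp add: yp_def)
  next
    case (Suc k) then show ?case using Smul[OF y(1) Suc] by (simp add: yp_def)
  qed
  have ypP: "circ (ppow m x r) (yp k) = ppow m x r" for k
  proof (induction k)
    case 0 then show ?case using y by (simp add: yp_def)
  next
    case (Suc k)
    have "circ (ppow m x r) (yp (Suc k)) = circ (circ (ppow m x r) y) (yp k)"
      by (simp add: yp_def circ_assoc)
    also have "\<dots> = ppow m x r" using y(2) Suc by simp
    finally show ?case .
  qed
  define e where "e = yp r"
  have unit: "circ v e = v" if "v \<in> SS x r" for v
    using that unfolding SS_def
  proof (induction rule: span_induct_alt)
    case base then show ?case by (simp add: circ_01)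
  next
    case (step c g w)
    then obtain j where j: "g = ppow m x j" "r \<le> j" by blast
    have "circ g e = g"
    proof (cases "j = r")
      case True then show ?thesis using j ypP by (simp add: e_def)
    next
      case False
      then have g: "g = circ (ppow m x (j - Suc r)) (ppow m x r)" using j by (simp add: circ_PP)
      show ?thesis unfolding g circ_assoc e_def ypP by simp
    qed
    then show ?case using step by (simp add: circ_add1 circ_sc1)
  qed
  have ee: "circ e e = e" using unit ypS unfolding e_def by blast
  have "e \<noteq> 0"
  proof
    assume "e = 0"
    then have "ppow m x r = 0" using ypP[of r] by (simp add: e_def circ_02)
    then show False using nz by blast
  qed
  then show ?thesis using ee circ_self by metis
qed

end

theorem mainTheorem4:
  fixes scale :: "'k::field \<Rightarrow> 'v::ab_group_add \<Rightarrow> 'v"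
    and m :: "'v \<Rightarrow> 'v \<Rightarrow> 'v"
  assumes char2: "(2::'k) \<noteq> 0"
    and char3: "(3::'k) \<noteq> 0"
    and fdim: "\<exists>B. finite_dimensional_vector_space scale B"
    and bil: "bilinear_prod scale m"
    and adm: "admissible_poisson scale m"
    and notnil: "\<not> nilalgebra m"
  shows "\<exists>e. e \<noteq> 0 \<and> m e e = e"
proof -
  obtain B where B: "finite_dimensional_vector_space scale B" using fdim by blast
  have "apa scale B m"
    unfolding apa_def apa_axioms_def using B char2 char3 bil adm by blast
  then interpret A: apa scale B m .
  obtain x where "\<forall>i. ppow m x i \<noteq> 0"
    using notnil unfolding nilalgebra_def nilpotent_elem_def by blast
  then show ?thesis by (rule A.idem)
qed

end
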